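(* Let $(n_i)_{i\ge1}$ be positive integers with $n_i\mid n_j$ for all $i\le j$ and $n_j\to\infty$, let $X=\varprojlim \mathbb{Z}/n_i\mathbb{Z}$ and let $T:X\to X$ be the odometer map $T((x_i+n_i\mathbb{Z})_i)=(x_i+1+n_i\mathbb{Z})_i$. Let $p$ be a prime. Then the following are equivalent: (1) for every continuous map $f:X\to\mathbb{Z}/p\mathbb{Z}$ there is a continuous map $L:X\to\mathbb{Z}/p\mathbb{Z}$ with $f(x)=L(Tx)-L(x)$ for all $x\in X$ (i.e. the cocycle determined by $c(1,x)=f(x)$ is a coboundary); (2) $\sup_i \operatorname{ord}(p,n_i)=\infty$, where $\operatorname{ord}(p,n)=\max\{k\ge 0: p^k\mid n\}$.
   Context: $\varprojlim \mathbb{Z}/n_i\mathbb{Z}=\{(x_i+n_i\mathbb{Z})_{i\ge1}\in\prod_i\mathbb{Z}/n_i\mathbb{Z}: n_i\mid (x_{i+1}-x_i)\ \forall i\}$ with the product topology. *)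

theory Defs
  imports "HOL-Analysis.Analysis" "HOL-Computational_Algebra.Primes"
begin

text \<open>Indices are shifted to start at 0: n 0, n 1, ... stands for n_1, n_2, ...
  An element x_i + n_i Z of Z/n_iZ is represented by its least nonnegative
  residue x i in {..<n i}.\<close>

definition odometer_space :: "(nat \<Rightarrow> nat) \<Rightarrow> (nat \<Rightarrow> nat) set" where
  "odometer_space n =
     {x. (\<forall>i. x i < n i) \<and> (\<forall>i. int (n i) dvd int (x (Suc i)) - int (x i))}"

definition odometer_topology :: "(nat \<Rightarrow> nat) \<Rightarrow> (nat \<Rightarrow> nat) topology" where
  "odometer_topology n =
     subtopology (product_topology (\<lambda>i. discrete_topology {..<n i}) UNIV) (odometer_space n)"

definition odometer :: "(nat \<Rightarrow> nat) \<Rightarrow> (nat \<Rightarrow> nat) \<Rightarrow> (nat \<Rightarrow> nat)" where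
  "odometer n x = (\<lambda>i. (x i + 1) mod n i)"

text \<open>Z/pZ is represented as {0..<p} (integers) with the discrete topology.\<close>
definition Zmod_topology :: "nat \<Rightarrow> int topology" where
  "Zmod_topology p = discrete_topology {0..<int p}"

end

theory Submission
  imports Defs
begin

lemma topspace_odo: "topspace (odometer_topology n) = odometer_space n"
  unfolding odometer_topology_def odometer_space_def
  by (auto simp: topspace_product_topology PiE_def extensional_def)

lemma dvd_chain:
  assumes dvd: "\<And>i j. i \<le> j \<Longrightarrow> n i dvd n j"
    and x: "x \<in> odometer_space n" and im: "i \<le> m"
  shows "int (n i) dvd int (x m) - int (x i)"
  using im
proof (induction m)
  case 0 then show ?case by simp
next
  case (Suc m)
  show ?case
  proof (cases "i = Suc m")
    case True then show ?thesis by simp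
  next
    case False
    then have "i \<le> m" using Suc.prems by simp
    then have h1: "int (n i) dvd int (x m) - int (x i)" using Suc.IH by simp
    have "int (n m) dvd int (x (Suc m)) - int (x m)" using x unfolding odometer_space_def by auto
    moreover have "int (n i) dvd int (n m)" using dvd[OF \<open>i \<le> m\<close>] by simp
    ultimately have h2: "int (n i) dvd int (x (Suc m)) - int (x m)" using dvd_trans by blast
    have "int (x (Suc m)) - int (x i) = (int (x (Suc m)) - int (x m)) + (int (x m) - int (x i))" by simp
    then show ?thesis using h1 h2 by (metis dvd_add)
  qed
qed

lemma coord_mod:
  assumes dvd: "\<And>i j. i \<le> j \<Longrightarrow> n i dvd n j"
    and x: "x \<in> odometer_space n" and im: "i \<le> m"
  shows "x i = x m mod n i"
proof -
  have "int (n i) dvd int (x m) - int (x i)" by (rule dvd_chain[OF dvd x im])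
  then have "int (x m) mod int (n i) = int (x i) mod int (n i)"
    by (simp add: mod_eq_dvd_iff)
  then have "x m mod n i = x i mod n i"
    by (metis of_nat_eq_iff of_nat_mod)
  moreover have "x i < n i" using x unfolding odometer_space_def by auto
  ultimately show ?thesis by simp
qed

lemma agree:
  assumes dvd: "\<And>i j. i \<le> j \<Longrightarrow> n i dvd n j"
    and x: "x \<in> odometer_space n" and y: "y \<in> odometer_space n"
    and eq: "x m = y m" and im: "i \<le> m"
  shows "x i = y i"
  using coord_mod[OF dvd x im] coord_mod[OF dvd y im] eq by simp

definition emb :: "(nat \<Rightarrow> nat) \<Rightarrow> nat \<Rightarrow> nat \<Rightarrow> nat" where
  "emb n a = (\<lambda>i. a mod n i)"

lemma emb_in:
  assumes pos: "\<And>i. n i > 0" and dvd: "\<And>i j. i \<le> j \<Longrightarrow> n i dvd n j"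
  shows "emb n a \<in> odometer_space n"
  unfolding odometer_space_def emb_def
proof (intro CollectI conjI allI)
  fix i
  show "a mod n i < n i" using pos by simp
  have "n i dvd n (Suc i)" using dvd by simp
  then have "a mod n (Suc i) mod n i = a mod n i" by (simp add: mod_mod_cancel)
  then have "int (a mod n (Suc i)) mod int (n i) = int (a mod n i) mod int (n i)"
    by (metis of_nat_mod mod_mod_trivial)
  then show "int (n i) dvd int (a mod n (Suc i)) - int (a mod n i)"
    by (simp add: mod_eq_dvd_iff)
qed

lemma odometer_emb: "odometer n (emb n j) = emb n (Suc j)"
  unfolding odometer_def emb_def by (auto simp: mod_Suc_eq)

lemma sum_periodic:
  fixes h :: "nat \<Rightarrow> int"
  assumes per: "\<And>j. h j = h (j mod N)"
  shows "(\<Sum>j<q*N. h j) = int q * (\<Sum>j<N. h j)"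
proof (induction q)
  case 0 then show ?case by simp
next
  case (Suc q)
  have gen: "(\<Sum>j<A + M. h j) = (\<Sum>j<A. h j) + (\<Sum>j<M. h (A + j))" for A M
    by (induction M) (auto simp: add.commute add.left_commute)
  have "(\<Sum>j<Suc q * N. h j) = (\<Sum>j<q*N. h j) + (\<Sum>j<N. h (q*N + j))"
    using gen[of "q*N" N] by (simp add: add.commute)
  also have "(\<Sum>j<N. h (q*N + j)) = (\<Sum>j<N. h j)"
  proof (rule sum.cong)
    fix j assume "j \<in> {..<N}"
    have "h (q*N + j) = h ((q*N + j) mod N)" by (rule per)
    also have "\<dots> = h (j mod N)" by simp
    also have "\<dots> = h j" by (rule per[symmetric])
    finally show "h (q*N + j) = h j" .
  qed simp
  finally show ?case using Suc by (simp add: algebra_simps)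
qed


lemma loc_const:
  assumes dvd: "\<And>i j. i \<le> j \<Longrightarrow> n i dvd n j"
    and g: "continuous_map (odometer_topology n) (discrete_topology S) g"
    and x: "x \<in> odometer_space n"
  shows "\<exists>m. \<forall>y\<in>odometer_space n. y m = x m \<longrightarrow> g y = g x"
proof -
  have gx: "g x \<in> S" using continuous_map_image_subset_topspace[OF g] x topspace_odo[of n]
    by auto
  have "openin (odometer_topology n) {y \<in> topspace (odometer_topology n). g y \<in> {g x}}"
    by (rule openin_continuous_map_preimage[OF g]) (simp add: gx)
  then obtain T where T: "openin (product_topology (\<lambda>i. discrete_topology {..<n i}) UNIV) T"
    and Teq: "{y \<in> odometer_space n. g y \<in> {g x}} = T \<inter> odometer_space n"
  proof -
    have "openin (subtopology (product_topology (\<lambda>i. discrete_topology {..<n i}) UNIV) (odometer_space n))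
        {y \<in> odometer_space n. g y \<in> {g x}}"
      using \<open>openin (odometer_topology n) _\<close> unfolding topspace_odo unfolding odometer_topology_def .
    then show ?thesis using that unfolding openin_subtopology by blast
  qed
  have "x \<in> T" using Teq x by blast
  then obtain U where fin: "finite {i \<in> UNIV. U i \<noteq> topspace (discrete_topology {..<n i})}"
    and Uo: "\<forall>i\<in>UNIV. openin (discrete_topology {..<n i}) (U i)"
    and xU: "x \<in> Pi\<^sub>E UNIV U" and UT: "Pi\<^sub>E UNIV U \<subseteq> T"
    using T unfolding openin_product_topology_alt by blast
  define F where "F = {i \<in> UNIV. U i \<noteq> topspace (discrete_topology {..<n i})}"
  define m where "m = Max (insert 0 F)"
  have Fm: "i \<in> F \<Longrightarrow> i \<le> m" for i using fin unfolding m_def F_def by simp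
  show ?thesis
  proof (intro exI ballI impI)
    fix y assume y: "y \<in> odometer_space n" and ym: "y m = x m"
    have "y \<in> Pi\<^sub>E UNIV U"
    proof (unfold PiE_UNIV_domain, rule Pi_I)
      fix i
      show "y i \<in> U i"
      proof (cases "i \<in> F")
        case True
        then have "y i = x i" using agree[OF dvd y x ym Fm[OF True]] by simp
        then show ?thesis using xU by (auto simp: PiE_UNIV_domain)
      next
        case False
        then have "U i = {..<n i}" unfolding F_def by simp
        then show ?thesis using y unfolding odometer_space_def by auto
      qed
    qed
    then have "y \<in> T" using UT by blast
    then show "g y = g x" using Teq y by blast
  qed
qed


abbreviation prodtop :: "(nat \<Rightarrow> nat) \<Rightarrow> (nat \<Rightarrow> nat) topology" where
  "prodtop n \<equiv> product_topology (\<lambda>i. discrete_topology {..<n i}) UNIV"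

lemma topspace_prodtop: "topspace (prodtop n) = {x. \<forall>i. x i < n i}"
  by (auto simp: topspace_product_topology PiE_UNIV_domain)

lemma proj_prod: "continuous_map (prodtop n) (discrete_topology {..<n m}) (\<lambda>x. x m)"
  using continuous_map_product_projection[where X="\<lambda>i. discrete_topology {..<n i}", OF UNIV_I] .

lemma proj_cont: "continuous_map (odometer_topology n) (discrete_topology {..<n m}) (\<lambda>x. x m)"
  unfolding odometer_topology_def
  by (rule continuous_map_from_subtopology) (rule proj_prod)

lemma coord_cont:
  assumes "g \<in> {..<n m} \<rightarrow> S"
  shows "continuous_map (odometer_topology n) (discrete_topology S) (\<lambda>x. g (x m))"
proof -
  have "continuous_map (odometer_topology n) (discrete_topology S) (g \<circ> (\<lambda>x. x m))"
    by (rule continuous_map_compose[OF proj_cont]) (simp add: continuous_map_from_discrete_topology assms)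
  then show ?thesis by (simp add: o_def)
qed

lemma odo_compact:
  assumes pos: "\<And>i. n i > 0"
  shows "compact_space (odometer_topology n)"
proof -
  have cp: "compact_space (prodtop n)"
    by (simp add: compact_space_product_topology compact_space_discrete_topology)
  define C where "C i = {x \<in> topspace (prodtop n). (x i, x (Suc i)) \<in>
      {(a,b). a \<in> {..<n i} \<and> b \<in> {..<n (Suc i)} \<and> int (n i) dvd int b - int a}}" for i
  have cc: "closedin (prodtop n) (C i)" for i
  proof -
    have "continuous_map (prodtop n) (prod_topology (discrete_topology {..<n i}) (discrete_topology {..<n (Suc i)}))
        (\<lambda>x. (x i, x (Suc i)))"
      unfolding continuous_map_paired using proj_prod by blast
    then have "continuous_map (prodtop n) (discrete_topology ({..<n i} \<times> {..<n (Suc i)})) (\<lambda>x. (x i, x (Suc i)))"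
      by (simp add: prod_topology_discrete_topology)
    then show ?thesis unfolding C_def
      by (rule closedin_continuous_map_preimage) (auto simp: closedin_discrete_topology)
  qed
  have eq: "odometer_space n = (\<Inter>i\<in>UNIV. C i)"
    unfolding odometer_space_def C_def topspace_prodtop by auto
  have "closedin (prodtop n) (odometer_space n)"
    unfolding eq by (rule closedin_INT) (auto simp: cc)
  then have "compactin (prodtop n) (odometer_space n)"
    by (rule closedin_compact_space[OF cp])
  then show ?thesis unfolding odometer_topology_def by (rule compact_space_subtopology)
qed


lemma fin_dep:
  assumes pos: "\<And>i. n i > 0" and dvd: "\<And>i j. i \<le> j \<Longrightarrow> n i dvd n j"
    and g: "continuous_map (odometer_topology n) (discrete_topology S) g"
  shows "\<exists>M. \<forall>x\<in>odometer_space n. \<forall>y\<in>odometer_space n. x M = y M \<longrightarrow> g x = g y"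
proof -
  define A where "A m = {a \<in> {..<n m}. \<forall>y\<in>odometer_space n. \<forall>y'\<in>odometer_space n.
      y m = a \<and> y' m = a \<longrightarrow> g y = g y'}" for m
  define W where "W m = {x \<in> topspace (odometer_topology n). x m \<in> A m}" for m
  have Wo: "openin (odometer_topology n) (W m)" for m
  proof -
    have "A m \<subseteq> {..<n m}" unfolding A_def by blast
    then show ?thesis unfolding W_def
      by (intro openin_continuous_map_preimage[OF proj_cont]) (simp add: openin_discrete_topology)
  qed
  have cov: "odometer_space n \<subseteq> \<Union>(range W)"
  proof
    fix x assume x: "x \<in> odometer_space n"
    obtain m where m: "\<forall>y\<in>odometer_space n. y m = x m \<longrightarrow> g y = g x"
      using loc_const[OF dvd g x] by blast
    have "x m < n m" using x unfolding odometer_space_def by auto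
    have "x m \<in> A m" unfolding A_def
    proof (intro CollectI conjI ballI impI)
      show "x m \<in> {..<n m}" using \<open>x m < n m\<close> by simp
      fix y y' assume "y \<in> odometer_space n" "y' \<in> odometer_space n" "y m = x m \<and> y' m = x m"
      then have "g y = g x" "g y' = g x" using m by auto
      then show "g y = g y'" by simp
    qed
    then have "x \<in> W m" using x unfolding W_def topspace_odo by blast
    then show "x \<in> \<Union>(range W)" by blast
  qed
  have "compactin (odometer_topology n) (odometer_space n)"
    using odo_compact[OF pos] unfolding compact_space_def topspace_odo .
  then obtain \<F> where fF: "finite \<F>" and FW: "\<F> \<subseteq> range W" and Fc: "odometer_space n \<subseteq> \<Union>\<F>"
  proof -
    have "(\<forall>U\<in>range W. openin (odometer_topology n) U) \<and> odometer_space n \<subseteq> \<Union>(range W)"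
      using Wo cov by blast
    then have "\<exists>\<F>. finite \<F> \<and> \<F> \<subseteq> range W \<and> odometer_space n \<subseteq> \<Union>\<F>"
      using \<open>compactin _ _\<close>[unfolded compactin_def, THEN conjunct2, rule_format, of "range W"] by blast
    then show ?thesis using that by blast
  qed
  obtain K where K: "finite K" "\<F> = W ` K" using finite_subset_image[OF fF FW] by blast
  define M where "M = Max (insert 0 K)"
  have KM: "k \<in> K \<Longrightarrow> k \<le> M" for k using K unfolding M_def by simp
  have mono: "W k \<subseteq> W M" if "k \<le> M" for k
  proof
    fix x assume "x \<in> W k"
    then have x: "x \<in> odometer_space n" and xk: "x k \<in> A k" unfolding W_def topspace_odo by auto
    have "x M \<in> A M"
      unfolding A_def
    proof (intro CollectI conjI ballI impI)
      show "x M \<in> {..<n M}" using x unfolding odometer_space_def by auto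
      fix y y' assume y: "y \<in> odometer_space n" and y': "y' \<in> odometer_space n"
        and e: "y M = x M \<and> y' M = x M"
      have "y k = x k" using agree[OF dvd y x _ that] e by simp
      moreover have "y' k = x k" using agree[OF dvd y' x _ that] e by simp
      moreover have "\<forall>y\<in>odometer_space n. \<forall>y'\<in>odometer_space n. y k = x k \<and> y' k = x k \<longrightarrow> g y = g y'"
        using xk unfolding A_def by (simp only: mem_Collect_eq) (rule conjunct2)
      ultimately show "g y = g y'" using y y' by blast
    qed
    then show "x \<in> W M" using x unfolding W_def topspace_odo by blast
  qed
  show ?thesis
  proof (intro exI ballI impI)
    fix x y assume x: "x \<in> odometer_space n" and y: "y \<in> odometer_space n" and e: "x M = y M"
    obtain k where "k \<in> K" "x \<in> W k" using Fc x K by blast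
    then have "x \<in> W M" using mono[OF KM] by blast
    then have "x M \<in> A M" unfolding W_def by blast
    then have "\<forall>y\<in>odometer_space n. \<forall>y'\<in>odometer_space n. y M = x M \<and> y' M = x M \<longrightarrow> g y = g y'"
      unfolding A_def by (simp only: mem_Collect_eq) (rule conjunct2)
    then show "g x = g y" using x y e by metis
  qed
qed


lemma sum_delta_mod:
  fixes N :: nat
  assumes "N > 0"
  shows "(\<Sum>j<N. (if j mod N = 0 then 1 else 0 :: int)) = 1"
proof -
  have "(\<Sum>j<N. (if j mod N = 0 then 1 else 0 :: int)) = (\<Sum>j<N. (if j = 0 then 1 else 0 :: int))"
  proof (rule sum.cong)
    fix j assume "j \<in> {..<N}"
    then have "j mod N = j" by simp
    then show "(if j mod N = 0 then 1 else 0 :: int) = (if j = 0 then 1 else 0)" by simp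
  qed simp
  also have "\<dots> = 1" using assms by (simp add: sum.delta)
  finally show ?thesis .
qed

lemma mult_split:
  fixes p q a :: nat
  assumes "prime p" "q > 0" "a > 0"
  shows "multiplicity p (q * a) = multiplicity p q + multiplicity p a"
  using assms by (simp add: prime_elem_multiplicity_mult_distrib)

lemma mult_pos_dvd:
  fixes p q :: nat
  assumes "prime p" "q > 0"
  shows "multiplicity p q > 0 \<longleftrightarrow> p dvd q"
  using assms by (simp add: prime_multiplicity_gt_zero_iff)

theorem proposition3p4:
  fixes n :: "nat \<Rightarrow> nat" and p :: nat
  assumes pos: "\<And>i. n i > 0"
    and dvd: "\<And>i j. i \<le> j \<Longrightarrow> n i dvd n j"
    and lim: "filterlim n at_top sequentially"
    and prime: "prime p"
  shows "(\<forall>f. continuous_map (odometer_topology n) (Zmod_topology p) f \<longrightarrow>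
            (\<exists>L. continuous_map (odometer_topology n) (Zmod_topology p) L \<and>
                 (\<forall>x\<in>odometer_space n. f x = (L (odometer n x) - L x) mod int p)))
         \<longleftrightarrow> \<not> bdd_above (range (\<lambda>i. multiplicity p (n i)))"
proof -
  have p1: "p > 1" using prime prime_gt_1_nat by blast
  have monom: "multiplicity p (n i) \<le> multiplicity p (n j)" if "i \<le> j" for i j
    using dvd_imp_multiplicity_le[OF dvd[OF that]] pos[of j] by simp
  have ztop: "Zmod_topology p = discrete_topology {0..<int p}" by (simp add: Zmod_topology_def)
  show ?thesis
  proof
    assume H: "\<forall>f. continuous_map (odometer_topology n) (Zmod_topology p) f \<longrightarrow>
            (\<exists>L. continuous_map (odometer_topology n) (Zmod_topology p) L \<and>
                 (\<forall>x\<in>odometer_space n. f x = (L (odometer n x) - L x) mod int p))"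
    show "\<not> bdd_above (range (\<lambda>i. multiplicity p (n i)))"
    proof
      assume "bdd_above (range (\<lambda>i. multiplicity p (n i)))"
      then obtain B where B: "\<And>i. multiplicity p (n i) \<le> B"
        unfolding bdd_above_def by auto
      obtain k where kmax: "\<And>i. multiplicity p (n i) \<le> multiplicity p (n k)"
        using ex_has_greatest_nat[of "\<lambda>_. True" 0 "\<lambda>i. multiplicity p (n i)" "Suc B"] B
        by (metis le_imp_less_Suc)
      define g :: "nat \<Rightarrow> int" where "g a = (if a = 0 then 1 else 0)" for a
      define f where "f x = g (x k)" for x :: "nat \<Rightarrow> nat"
      have "g \<in> {..<n k} \<rightarrow> {0..<int p}" using p1 unfolding g_def by auto
      then have fc: "continuous_map (odometer_topology n) (Zmod_topology p) f"
        unfolding ztop f_def by (rule coord_cont)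
      then obtain L where Lc: "continuous_map (odometer_topology n) (discrete_topology {0..<int p}) L"
        and Leq: "\<And>x. x \<in> odometer_space n \<Longrightarrow> f x = (L (odometer n x) - L x) mod int p"
        using H ztop by metis
      have ein: "\<And>a. emb n a \<in> odometer_space n" using emb_in[OF pos dvd] .
      obtain m0 where m0: "\<forall>y\<in>odometer_space n. y m0 = emb n 0 m0 \<longrightarrow> L y = L (emb n 0)"
        using loc_const[OF dvd Lc ein] by blast
      define m where "m = max m0 k"
      have km: "k \<le> m" unfolding m_def by simp
      have "n m0 dvd n m" using dvd[of m0 m] unfolding m_def by simp
      then have "emb n (n m) m0 = emb n 0 m0" by (simp add: emb_def)
      then have Lz: "L (emb n (n m)) = L (emb n 0)" using m0 ein by blast
      have tele: "(L (emb n N) - L (emb n 0)) mod int p = (\<Sum>j<N. f (emb n j)) mod int p" for N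
      proof (induction N)
        case 0 then show ?case by simp
      next
        case (Suc N)
        have st: "f (emb n N) = (L (emb n (Suc N)) - L (emb n N)) mod int p"
          using Leq[OF ein[of N]] by (simp add: odometer_emb)
        have "(L (emb n (Suc N)) - L (emb n 0)) mod int p
            = ((L (emb n (Suc N)) - L (emb n N)) + (L (emb n N) - L (emb n 0))) mod int p" by simp
        also have "\<dots> = ((L (emb n (Suc N)) - L (emb n N)) mod int p + (L (emb n N) - L (emb n 0)) mod int p) mod int p"
          by (simp add: mod_add_eq)
        also have "\<dots> = (f (emb n N) + (\<Sum>j<N. f (emb n j)) mod int p) mod int p"
          using st Suc.IH by simp
        also have "\<dots> = (\<Sum>j<Suc N. f (emb n j)) mod int p"
          by (simp add: mod_add_right_eq add.commute)
        finally show ?case .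
      qed
      have s0: "(\<Sum>j<n m. f (emb n j)) mod int p = 0" using tele[of "n m"] Lz by simp
      obtain q where q: "n m = q * n k" using dvd[OF km] by (metis dvd_def mult.commute)
      have qpos: "q > 0" using q pos[of m] by (cases q) auto
      define h :: "nat \<Rightarrow> int" where "h j = (if j mod n k = 0 then 1 else 0)" for j
      have fh: "f (emb n j) = h j" for j unfolding f_def g_def h_def emb_def by simp
      have "(\<Sum>j<n m. f (emb n j)) = (\<Sum>j<q * n k. h j)" using q fh by simp
      also have "\<dots> = int q * (\<Sum>j<n k. h j)"
        by (rule sum_periodic) (simp add: h_def)
      also have "(\<Sum>j<n k. h j) = 1" unfolding h_def using pos[of k] by (rule sum_delta_mod)
      finally have "int q mod int p = 0" using s0 by simp
      then have pq: "p dvd q" by (metis dvd_imp_mod_0 mod_0_imp_dvd of_nat_dvd_iff)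
      have "multiplicity p (n m) = multiplicity p q + multiplicity p (n k)"
        unfolding q by (rule mult_split[OF prime qpos pos])
      then have "multiplicity p q = 0" using kmax[of m] by simp
      then show False using mult_pos_dvd[OF prime qpos] pq by simp
    qed
  next
    assume unb: "\<not> bdd_above (range (\<lambda>i. multiplicity p (n i)))"
    show "\<forall>f. continuous_map (odometer_topology n) (Zmod_topology p) f \<longrightarrow>
            (\<exists>L. continuous_map (odometer_topology n) (Zmod_topology p) L \<and>
                 (\<forall>x\<in>odometer_space n. f x = (L (odometer n x) - L x) mod int p))"
    proof (intro allI impI)
      fix f assume fc0: "continuous_map (odometer_topology n) (Zmod_topology p) f"
      then have fc: "continuous_map (odometer_topology n) (discrete_topology {0..<int p}) f"
        using ztop by simp
      have frange: "f x \<in> {0..<int p}" if "x \<in> odometer_space n" for x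
        using continuous_map_image_subset_topspace[OF fc] that topspace_odo[of n] by auto
      obtain m where fm: "\<forall>x\<in>odometer_space n. \<forall>y\<in>odometer_space n. x m = y m \<longrightarrow> f x = f y"
        using fin_dep[OF pos dvd fc] by blast
      obtain M where M: "multiplicity p (n M) > multiplicity p (n m)"
        using unb unfolding bdd_above_def by (metis (mono_tags, lifting) leI rangeE)
      have mM: "m \<le> M" using M monom[of M m] by (cases "m \<le> M") auto
      obtain q where q: "n M = q * n m" using dvd[OF mM] by (metis dvd_def mult.commute)
      have qpos: "q > 0" using q pos[of M] by (cases q) auto
      have "multiplicity p (n M) = multiplicity p q + multiplicity p (n m)"
        unfolding q by (rule mult_split[OF prime qpos pos])
      then have "multiplicity p q > 0" using M by simp
      then have pq: "p dvd q" using mult_pos_dvd[OF prime qpos] by simp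
      have ein: "\<And>a. emb n a \<in> odometer_space n" using emb_in[OF pos dvd] .
      define h where "h j = f (emb n j)" for j
      have hper: "h j = h (j mod n m)" for j
        unfolding h_def using fm ein by (metis emb_def mod_mod_trivial)
      have total: "(\<Sum>j<n M. h j) mod int p = 0"
      proof -
        have "(\<Sum>j<n M. h j) = int q * (\<Sum>j<n m. h j)" unfolding q by (rule sum_periodic) (rule hper)
        then show ?thesis using pq by (simp add: mod_0_imp_dvd dvd_mult2 int_dvd_int_iff)
      qed
      define g where "g a = (\<Sum>j<a. h j) mod int p" for a
      define L where "L x = g (x M)" for x :: "nat \<Rightarrow> nat"
      have "g \<in> {..<n M} \<rightarrow> {0..<int p}" using p1 unfolding g_def by auto
      then have Lc: "continuous_map (odometer_topology n) (Zmod_topology p) L"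
        unfolding ztop L_def by (rule coord_cont)
      show "\<exists>L. continuous_map (odometer_topology n) (Zmod_topology p) L \<and>
                 (\<forall>x\<in>odometer_space n. f x = (L (odometer n x) - L x) mod int p)"
      proof (intro exI conjI ballI)
        show "continuous_map (odometer_topology n) (Zmod_topology p) L" by (rule Lc)
        fix x assume x: "x \<in> odometer_space n"
        have xM: "x M < n M" using x unfolding odometer_space_def by auto
        have "emb n (x M) M = x M" using xM by (simp add: emb_def)
        then have fx: "f x = h (x M)" unfolding h_def
          using fm agree[OF dvd x ein] mM x ein by metis
        have fxr: "f x mod int p = f x" using frange[OF x] by simp
        have LT: "L (odometer n x) = g ((x M + 1) mod n M)" unfolding L_def odometer_def by simp
        have "(L (odometer n x) - L x) mod int p = ((\<Sum>j<(x M + 1) mod n M. h j) - (\<Sum>j<x M. h j)) mod int p"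
          unfolding LT unfolding L_def g_def by (simp add: mod_diff_eq)
        also have "\<dots> = f x"
        proof (cases "x M + 1 < n M")
          case True
          then show ?thesis using fx fxr by simp
        next
          case False
          then have e: "x M + 1 = n M" using xM by simp
          have "(\<Sum>j<n M. h j) = (\<Sum>j<x M. h j) + f x" using e fx
            by (metis add.commute sum.lessThan_Suc Suc_eq_plus1)
          then have "(0 - (\<Sum>j<x M. h j)) mod int p = (f x - (\<Sum>j<n M. h j)) mod int p" by simp
          also have "\<dots> = (f x - (\<Sum>j<n M. h j) mod int p) mod int p" by (simp add: mod_diff_right_eq)
          also have "\<dots> = f x" using total fxr by simp
          finally show ?thesis using e by simp
        qed
        finally show "f x = (L (odometer n x) - L x) mod int p" by simp
      qed
    qed
  qed
qed

end
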